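(* Let $\phi,\varphi:\mathbb{R}\to\mathbb{R}$ be activation functions, let $\boldsymbol{W}_{\mathrm{in}},\boldsymbol{W}_{\mathrm{out}},\boldsymbol{W}\in L^2(\mathbb{Z}_p\times\mathbb{Z}_p)$ and $\boldsymbol{\xi},\boldsymbol{\xi}_{\mathrm{out}},\mathbf{x}\in L^2(\mathbb{Z}_p)$. If $L_\phi\|\boldsymbol{W}\|_2\in(0,1)$, then there exists a unique $\boldsymbol{h}\in L^2(\mathbb{Z}_p)$ with $$\boldsymbol{h}(x)=\int_{\mathbb{Z}_p}\boldsymbol{W}(x,y)\phi(\boldsymbol{h}(y))\,dy+\int_{\mathbb{Z}_p}\boldsymbol{W}_{\mathrm{in}}(x,y)\mathbf{x}(y)\,dy+\boldsymbol{\xi}(x),$$ hence a unique output $\boldsymbol{y}(x)=\int_{\mathbb{Z}_p}\boldsymbol{W}_{\mathrm{out}}(x,y)\varphi(\boldsymbol{h}(y))\,dy+\boldsymbol{\xi}_{\mathrm{out}}(x)$, with $\boldsymbol{h},\boldsymbol{y}\in L^2(\mathbb{Z}_p)$. Furthermore, $$\|\boldsymbol{h}\|_2\le 1+\|\boldsymbol{W}_{\mathrm{in}}\|_2\|\mathbf{x}\|_2+\|\boldsymbol{\xi}\|_2.$$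
   Context: $p$ is a prime, $\mathbb{Z}_p$ the ring of $p$-adic integers with Haar measure $dx$ normalized so that $\int_{\mathbb{Z}_p}dx=1$ (product measure on $\mathbb{Z}_p\times\mathbb{Z}_p$); $\|\cdot\|_2$ is the $L^2$ norm. An activation function is a map $\omega:\mathbb{R}\to\mathbb{R}$ that is globally Lipschitz, $|\omega(s)-\omega(t)|\le L_\omega|s-t|$ for all $s,t$, with $\omega(0)=0$; following the paper's standing convention, activation functions are moreover bounded with $L_\omega=\|\omega\|_\infty$. *)

theory Defs
  imports "HOL-Probability.Probability"
begin

text \<open>The p-adic integers as a measure space: a p-adic integer is identified with its
  sequence of p-adic digits (x = sum_k d_k p^k), and the normalized Haar measure on Z_p
  is the infinite product of the uniform measures on the digit sets {0,..,p-1}.\<close>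
definition Zp :: "nat \<Rightarrow> (nat \<Rightarrow> nat) measure" where
  "Zp p = PiM UNIV (\<lambda>_. measure_pmf (pmf_of_set {..<p}))"

definition L2 :: "'a measure \<Rightarrow> ('a \<Rightarrow> real) \<Rightarrow> bool" where
  "L2 M f \<longleftrightarrow> f \<in> borel_measurable M \<and> integrable M (\<lambda>x. (f x)\<^sup>2)"

definition L2norm :: "'a measure \<Rightarrow> ('a \<Rightarrow> real) \<Rightarrow> real" where
  "L2norm M f = sqrt (\<integral>x. (f x)\<^sup>2 \<partial>M)"

text \<open>Sup norm; by the paper's convention this is also the Lipschitz constant L_omega.\<close>
definition Lact :: "(real \<Rightarrow> real) \<Rightarrow> real" where
  "Lact \<omega> = (SUP s. \<bar>\<omega> s\<bar>)"

definition activation :: "(real \<Rightarrow> real) \<Rightarrow> bool" where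
  "activation \<omega> \<longleftrightarrow> bounded (range \<omega>) \<and> \<omega> 0 = 0 \<and>
     (\<forall>s t. \<bar>\<omega> s - \<omega> t\<bar> \<le> Lact \<omega> * \<bar>s - t\<bar>)"

end

theory Submission imports Defs begin


lemma disc_aux:
  fixes A B C :: real
  assumes "\<And>t. 0 \<le> A - 2*t*B + t^2*C" "0 \<le> C"
  shows "B^2 \<le> A*C"
proof (cases "C = 0")
  case True
  have "B = 0"
  proof (rule ccontr)
    assume "B \<noteq> 0"
    have "0 \<le> A - 2*((A+1)/(2*B))*B" using assms(1)[of "(A+1)/(2*B)"] True by simp
    also have "\<dots> = -1" using \<open>B \<noteq> 0\<close> by (simp add: field_simps)
    finally show False by simp
  qed
  then show ?thesis using True by simp
next
  case False
  then have C: "C > 0" using assms(2) by simp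
  have "0 \<le> A - 2*(B/C)*B + (B/C)^2*C" by (rule assms(1))
  also have "\<dots> = (A*C - B^2)/C" using C by (simp add: field_simps power2_eq_square)
  finally show ?thesis using C by (simp add: divide_nonneg_pos zero_le_divide_iff)
qed

lemma sq_prod_int:
  fixes f g :: "'a \<Rightarrow> real"
  assumes [measurable]: "f \<in> borel_measurable M" "g \<in> borel_measurable M"
    and "integrable M (\<lambda>x. (f x)^2)" "integrable M (\<lambda>x. (g x)^2)"
  shows "integrable M (\<lambda>x. f x * g x)"
proof (rule Bochner_Integration.integrable_bound)
  show "integrable M (\<lambda>x. (f x)^2 + (g x)^2)" using assms by auto
  show "AE x in M. norm (f x * g x) \<le> norm ((f x)^2 + (g x)^2)"
  proof (intro AE_I2)
    fix x
    have "2*\<bar>f x\<bar>*\<bar>g x\<bar> \<le> (f x)^2 + (g x)^2"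
      using sum_squares_bound[of "\<bar>f x\<bar>" "\<bar>g x\<bar>"] by (simp add: power2_abs)
    moreover have "\<bar>f x\<bar>*\<bar>g x\<bar> \<ge> 0" by simp
    moreover have "(f x)^2 + (g x)^2 \<ge> 0" by simp
    ultimately have h: "\<bar>f x\<bar>*\<bar>g x\<bar> \<le> (f x)^2 + (g x)^2" by linarith
    have e1: "norm (f x * g x) = \<bar>f x\<bar>*\<bar>g x\<bar>" by (simp add: abs_mult)
    have e2: "norm ((f x)^2 + (g x)^2) = (f x)^2 + (g x)^2" by simp
    show "norm (f x * g x) \<le> norm ((f x)^2 + (g x)^2)"
      unfolding e1 e2 by (rule h)
  qed
qed simp

lemma cauchy_schwarz_int:
  fixes f g :: "'a \<Rightarrow> real"
  assumes [measurable]: "f \<in> borel_measurable M" "g \<in> borel_measurable M"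
    and fi: "integrable M (\<lambda>x. (f x)^2)" and gi: "integrable M (\<lambda>x. (g x)^2)"
  shows "(\<integral>x. f x * g x \<partial>M)^2 \<le> (\<integral>x. (f x)^2 \<partial>M) * (\<integral>x. (g x)^2 \<partial>M)"
proof (rule disc_aux)
  have fg: "integrable M (\<lambda>x. f x * g x)" using sq_prod_int[OF assms] .
  fix t :: real
  have "0 \<le> (\<integral>x. (f x - t * g x)^2 \<partial>M)" by simp
  also have "(\<integral>x. (f x - t * g x)^2 \<partial>M) = (\<integral>x. (f x)^2 - 2*t*(f x * g x) + t^2 * (g x)^2 \<partial>M)"
    by (rule Bochner_Integration.integral_cong) (auto simp: power2_eq_square algebra_simps)
  also have "\<dots> = (\<integral>x. (f x)^2 \<partial>M) - 2*t*(\<integral>x. f x * g x \<partial>M) + t^2 * (\<integral>x. (g x)^2 \<partial>M)"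
    using fi gi fg by simp
  finally show "0 \<le> (\<integral>x. (f x)^2 \<partial>M) - 2*t*(\<integral>x. f x * g x \<partial>M) + t^2 * (\<integral>x. (g x)^2 \<partial>M)" .
qed simp

lemma L2_add:
  fixes f g :: "'a \<Rightarrow> real"
  assumes "L2 M f" "L2 M g" shows "L2 M (\<lambda>x. f x + g x)"
proof -
  have [measurable]: "f \<in> borel_measurable M" "g \<in> borel_measurable M" using assms by (auto simp: L2_def)
  have "integrable M (\<lambda>x. f x * g x)" using sq_prod_int[of f M g] assms by (auto simp: L2_def)
  then have "integrable M (\<lambda>x. (f x)^2 + 2 * (f x * g x) + (g x)^2)" using assms by (auto simp: L2_def)
  moreover have "(\<lambda>x. (f x + g x)^2) = (\<lambda>x. (f x)^2 + 2 * (f x * g x) + (g x)^2)"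
    by (rule ext) (simp add: power2_sum algebra_simps)
  ultimately show ?thesis unfolding L2_def by simp
qed

lemma L2_neg:
  fixes f :: "'a \<Rightarrow> real"
  assumes "L2 M f" shows "L2 M (\<lambda>x. - f x)"
  using assms by (simp add: L2_def)

lemma L2_diff:
  fixes f g :: "'a \<Rightarrow> real"
  assumes "L2 M f" "L2 M g" shows "L2 M (\<lambda>x. f x - g x)"
  using L2_add[OF assms(1) L2_neg[OF assms(2)]] by simp

lemma minkowski:
  fixes f g :: "'a \<Rightarrow> real"
  assumes "L2 M f" "L2 M g" shows "L2norm M (\<lambda>x. f x + g x) \<le> L2norm M f + L2norm M g"
proof -
  have [measurable]: "f \<in> borel_measurable M" "g \<in> borel_measurable M"
    and fi: "integrable M (\<lambda>x. (f x)^2)" and gi: "integrable M (\<lambda>x. (g x)^2)" using assms by (auto simp: L2_def)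
  have fg: "integrable M (\<lambda>x. f x * g x)" using sq_prod_int[of f M g] fi gi by auto
  define A where "A = (\<integral>x. (f x)^2 \<partial>M)"
  define C where "C = (\<integral>x. (g x)^2 \<partial>M)"
  define B where "B = (\<integral>x. f x * g x \<partial>M)"
  have A0: "A \<ge> 0" and C0: "C \<ge> 0" unfolding A_def C_def by auto
  have "B^2 \<le> A * C" unfolding A_def B_def C_def by (rule cauchy_schwarz_int) (use fi gi in auto)
  then have "\<bar>B\<bar> \<le> sqrt (A*C)" using real_le_rsqrt by (simp add: power2_abs)
  then have B: "B \<le> sqrt A * sqrt C" by (simp add: real_sqrt_mult)
  have eq: "(\<lambda>x. (f x + g x)^2) = (\<lambda>x. (f x)^2 + 2 * (f x * g x) + (g x)^2)"
    by (rule ext) (simp add: power2_sum algebra_simps)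
  have "(\<integral>x. (f x + g x)^2 \<partial>M) = (\<integral>x. (f x)^2 + 2 * (f x * g x) + (g x)^2 \<partial>M)"
    by (subst eq) (rule refl)
  also have "\<dots> = A + 2*B + C" unfolding A_def B_def C_def using fi gi fg by simp
  also have "\<dots> \<le> (sqrt A + sqrt C)^2" using B A0 C0 by (simp add: power2_sum)
  finally have "sqrt (\<integral>x. (f x + g x)^2 \<partial>M) \<le> sqrt ((sqrt A + sqrt C)^2)" by (rule real_sqrt_le_mono)
  then show ?thesis unfolding L2norm_def A_def C_def by simp
qed



context prob_space
begin

lemma sq_int_imp_int:
  fixes f :: "'a \<Rightarrow> real"
  assumes [measurable]: "f \<in> borel_measurable M" and "integrable M (\<lambda>x. (f x)^2)"
  shows "integrable M f"
proof -
  have "integrable M (\<lambda>x. f x * 1)"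
    by (rule sq_prod_int) (use assms in auto)
  then show ?thesis by simp
qed

lemma kernel_op:
  fixes K :: "'a \<times> 'a \<Rightarrow> real" and g :: "'a \<Rightarrow> real"
  assumes Km[measurable]: "K \<in> borel_measurable (M \<Otimes>\<^sub>M M)"
    and Ki: "integrable (M \<Otimes>\<^sub>M M) (\<lambda>z. (K z)^2)"
    and gm[measurable]: "g \<in> borel_measurable M" and gi: "integrable M (\<lambda>y. (g y)^2)"
  shows "L2 M (\<lambda>x. \<integral>y. K (x, y) * g y \<partial>M)"
    and "(\<integral>x. (\<integral>y. K (x, y) * g y \<partial>M)^2 \<partial>M) \<le> (\<integral>z. (K z)^2 \<partial>(M \<Otimes>\<^sub>M M)) * (\<integral>y. (g y)^2 \<partial>M)"
proof -
  interpret pair_prob_space M M by unfold_locales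
  have AEK: "AE x in M. integrable M (\<lambda>y. (K (x, y))^2)"
    using AE_integrable_fst'[OF Ki] by simp
  have bi: "integrable M (\<lambda>x. (\<integral>y. (K (x, y))^2 \<partial>M) * (\<integral>y. (g y)^2 \<partial>M))"
    using integrable_fst'[OF Ki] by simp
  have bnd: "AE x in M. (\<integral>y. K (x, y) * g y \<partial>M)^2 \<le> (\<integral>y. (K (x, y))^2 \<partial>M) * (\<integral>y. (g y)^2 \<partial>M)"
    using AEK AE_space
  proof eventually_elim
    case (elim x)
    have "(\<lambda>y. K (x, y)) \<in> borel_measurable M" using measurable_Pair2[OF Km] elim by blast
    then show ?case by (intro cauchy_schwarz_int) (use elim gi in auto)
  qed
  have m: "(\<lambda>x. \<integral>y. K (x, y) * g y \<partial>M) \<in> borel_measurable M" by measurable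
  have i: "integrable M (\<lambda>x. (\<integral>y. K (x, y) * g y \<partial>M)^2)"
  proof (rule Bochner_Integration.integrable_bound[OF bi])
    show "AE x in M. norm ((\<integral>y. K (x, y) * g y \<partial>M)^2) \<le> norm ((\<integral>y. (K (x, y))^2 \<partial>M) * (\<integral>y. (g y)^2 \<partial>M))"
      using bnd by eventually_elim (auto simp: abs_mult)
  qed (use m in simp)
  then show "L2 M (\<lambda>x. \<integral>y. K (x, y) * g y \<partial>M)" using m by (simp add: L2_def)
  have "(\<integral>x. (\<integral>y. K (x, y) * g y \<partial>M)^2 \<partial>M) \<le> (\<integral>x. (\<integral>y. (K (x, y))^2 \<partial>M) * (\<integral>y. (g y)^2 \<partial>M) \<partial>M)"
    by (rule integral_mono_AE[OF i bi bnd])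
  also have "\<dots> = (\<integral>x. (\<integral>y. (K (x, y))^2 \<partial>M) \<partial>M) * (\<integral>y. (g y)^2 \<partial>M)" by simp
  also have "(\<integral>x. (\<integral>y. (K (x, y))^2 \<partial>M) \<partial>M) = (\<integral>z. (K z)^2 \<partial>(M \<Otimes>\<^sub>M M))"
    using integral_fst'[OF Ki] by simp
  finally show "(\<integral>x. (\<integral>y. K (x, y) * g y \<partial>M)^2 \<partial>M) \<le> (\<integral>z. (K z)^2 \<partial>(M \<Otimes>\<^sub>M M)) * (\<integral>y. (g y)^2 \<partial>M)" .
qed

lemma AE_sq_int_fst:
  fixes K :: "'a \<times> 'a \<Rightarrow> real"
  assumes Ki: "integrable (M \<Otimes>\<^sub>M M) (\<lambda>z. (K z)^2)"
  shows "AE x in M. integrable M (\<lambda>y. (K (x, y))^2)"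
proof -
  interpret pair_prob_space M M by unfold_locales
  show ?thesis using AE_integrable_fst'[OF Ki] by simp
qed

lemma L1_le_L2:
  fixes f :: "'a \<Rightarrow> real"
  assumes [measurable]: "f \<in> borel_measurable M" and fi: "integrable M (\<lambda>x. (f x)^2)"
  shows "(\<integral>x. \<bar>f x\<bar> \<partial>M) \<le> sqrt (\<integral>x. (f x)^2 \<partial>M)"
proof -
  have "(\<integral>x. \<bar>f x\<bar> * 1 \<partial>M)^2 \<le> (\<integral>x. \<bar>f x\<bar>^2 \<partial>M) * (\<integral>x. 1^2 \<partial>M)"
    by (rule cauchy_schwarz_int) (use fi in auto)
  then have "(\<integral>x. \<bar>f x\<bar> \<partial>M)^2 \<le> (\<integral>x. (f x)^2 \<partial>M)" by (simp add: prob_space)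
  then show ?thesis by (simp add: real_le_rsqrt)
qed

lemma AE_summable:
  fixes f :: "nat \<Rightarrow> 'a \<Rightarrow> real"
  assumes [measurable]: "\<And>n. f n \<in> borel_measurable M"
    and i: "\<And>n. integrable M (f n)"
    and s: "summable (\<lambda>n. \<integral>x. \<bar>f n x\<bar> \<partial>M)"
  shows "AE x in M. summable (\<lambda>n. \<bar>f n x\<bar>)"
proof -
  have "(\<integral>\<^sup>+x. (\<Sum>n. ennreal \<bar>f n x\<bar>) \<partial>M) = (\<Sum>n. \<integral>\<^sup>+x. ennreal \<bar>f n x\<bar> \<partial>M)"
    by (rule nn_integral_suminf) auto
  also have "\<dots> = (\<Sum>n. ennreal (\<integral>x. \<bar>f n x\<bar> \<partial>M))"
    by (intro suminf_cong nn_integral_eq_integral) (use i in auto)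
  also have "\<dots> = ennreal (\<Sum>n. \<integral>x. \<bar>f n x\<bar> \<partial>M)"
    by (rule suminf_ennreal2) (use s in auto)
  finally have "(\<integral>\<^sup>+x. (\<Sum>n. ennreal \<bar>f n x\<bar>) \<partial>M) \<noteq> \<infinity>" by simp
  then have "AE x in M. (\<Sum>n. ennreal \<bar>f n x\<bar>) \<noteq> \<infinity>"
    by (rule nn_integral_PInf_AE[rotated]) measurable
  then show ?thesis
    by eventually_elim (rule summable_suminf_not_top, auto)
qed

end



lemma act_facts:
  assumes "activation \<omega>"
  shows "\<And>s. \<bar>\<omega> s\<bar> \<le> Lact \<omega>" and "0 \<le> Lact \<omega>"
    and "\<And>s t. \<bar>\<omega> s - \<omega> t\<bar> \<le> Lact \<omega> * \<bar>s - t\<bar>"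
    and "continuous_on UNIV \<omega>" and "\<omega> \<in> borel_measurable borel"
proof -
  have bd: "bounded (range \<omega>)" and z: "\<omega> 0 = 0" and lip: "\<And>s t. \<bar>\<omega> s - \<omega> t\<bar> \<le> Lact \<omega> * \<bar>s - t\<bar>"
    using assms by (auto simp: activation_def)
  then obtain a where a: "\<And>s. \<bar>\<omega> s\<bar> \<le> a" by (auto simp: bounded_iff)
  have bda: "bdd_above (range (\<lambda>s. \<bar>\<omega> s\<bar>))" using a by (intro bdd_aboveI[where M=a]) auto
  show ub: "\<And>s. \<bar>\<omega> s\<bar> \<le> Lact \<omega>" unfolding Lact_def by (rule cSUP_upper[OF _ bda]) simp
  show L0: "0 \<le> Lact \<omega>" using ub[of 0] by simp
  show "\<And>s t. \<bar>\<omega> s - \<omega> t\<bar> \<le> Lact \<omega> * \<bar>s - t\<bar>" by (rule lip)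
  have "lipschitz_on (Lact \<omega>) UNIV \<omega>" unfolding lipschitz_on_def dist_real_def using L0 lip by auto
  then show c: "continuous_on UNIV \<omega>" by (rule lipschitz_on_continuous_on)
  then show "\<omega> \<in> borel_measurable borel" by (rule borel_measurable_continuous_onI)
qed



context prob_space
begin

lemma main:
  fixes \<phi> \<psi> :: "real \<Rightarrow> real"
    and W_in W_out W :: "'a \<times> 'a \<Rightarrow> real"
    and \<xi> \<xi>_out xin :: "'a \<Rightarrow> real"
  assumes "activation \<phi>" and "activation \<psi>"
    and "L2 (M \<Otimes>\<^sub>M M) W_in" and "L2 (M \<Otimes>\<^sub>M M) W_out" and "L2 (M \<Otimes>\<^sub>M M) W"
    and "L2 M \<xi>" and "L2 M \<xi>_out" and "L2 M xin"
    and qpos: "0 < Lact \<phi> * L2norm (M \<Otimes>\<^sub>M M) W"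
    and qlt: "Lact \<phi> * L2norm (M \<Otimes>\<^sub>M M) W < 1"
  shows "\<exists>h. L2 M h
    \<and> (AE x in M. h x = (\<integral>y. W (x, y) * \<phi> (h y) \<partial>M)
                          + (\<integral>y. W_in (x, y) * xin y \<partial>M) + \<xi> x)
    \<and> (\<forall>h'. L2 M h'
          \<and> (AE x in M. h' x = (\<integral>y. W (x, y) * \<phi> (h' y) \<partial>M)
                          + (\<integral>y. W_in (x, y) * xin y \<partial>M) + \<xi> x)
          \<longrightarrow> (AE x in M. h' x = h x))
    \<and> L2 M (\<lambda>x. (\<integral>y. W_out (x, y) * \<psi> (h y) \<partial>M) + \<xi>_out x)
    \<and> L2norm M h \<le> 1 + L2norm (M \<Otimes>\<^sub>M M) W_in * L2norm M xin
                         + L2norm M \<xi>"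
proof -
  define L where "L = Lact \<phi>"
  define nW where "nW = (\<integral>z. (W z)^2 \<partial>(M \<Otimes>\<^sub>M M))"
  define q where "q = L * L2norm (M \<Otimes>\<^sub>M M) W"
  have phib: "\<And>s. \<bar>\<phi> s\<bar> \<le> L" and L0: "0 \<le> L" and philip: "\<And>s t. \<bar>\<phi> s - \<phi> t\<bar> \<le> L * \<bar>s - t\<bar>"
    and phic: "continuous_on UNIV \<phi>" and [measurable]: "\<phi> \<in> borel_measurable borel"
    using act_facts[OF assms(1)] unfolding L_def by auto
  have psib: "\<And>s. \<bar>\<psi> s\<bar> \<le> Lact \<psi>" and [measurable]: "\<psi> \<in> borel_measurable borel"
    using act_facts[OF assms(2)] by auto
  have [measurable]: "W \<in> borel_measurable (M \<Otimes>\<^sub>M M)" "W_in \<in> borel_measurable (M \<Otimes>\<^sub>M M)"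
    "W_out \<in> borel_measurable (M \<Otimes>\<^sub>M M)" "\<xi> \<in> borel_measurable M" "\<xi>_out \<in> borel_measurable M"
    "xin \<in> borel_measurable M"
    using assms by (auto simp: L2_def)
  have Wi: "integrable (M \<Otimes>\<^sub>M M) (\<lambda>z. (W z)^2)" and Wini: "integrable (M \<Otimes>\<^sub>M M) (\<lambda>z. (W_in z)^2)"
    and Wouti: "integrable (M \<Otimes>\<^sub>M M) (\<lambda>z. (W_out z)^2)" and xini: "integrable M (\<lambda>z. (xin z)^2)"
    using assms by (auto simp: L2_def)
  have nW0: "0 \<le> nW" unfolding nW_def by simp
  have q0: "0 < q" and q1: "q < 1" using qpos qlt unfolding q_def L_def by auto
  have q2: "nW * L^2 = q^2" unfolding q_def L2norm_def nW_def
    using nW0[unfolded nW_def] by (simp add: power_mult_distrib)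
  define T where "T g = (\<lambda>x. \<integral>y. W (x, y) * \<phi> (g y) \<partial>M)" for g :: "'a \<Rightarrow> real"
  define b where "b = (\<lambda>x. (\<integral>y. W_in (x, y) * xin y \<partial>M) + \<xi> x)"
  have Tm[measurable]: "T g \<in> borel_measurable M" if [measurable]: "g \<in> borel_measurable M" for g
    unfolding T_def by measurable
  have bm[measurable]: "b \<in> borel_measurable M" unfolding b_def by measurable
  have phisq: "integrable M (\<lambda>y. (\<phi> (g y))^2)" and phisq_le: "(\<integral>y. (\<phi> (g y))^2 \<partial>M) \<le> L^2"
    if [measurable]: "g \<in> borel_measurable M" for g
  proof -
    have bd: "\<And>y. (\<phi> (g y))^2 \<le> L^2"
      using phib by (metis abs_ge_zero power2_abs power_mono)
    show "integrable M (\<lambda>y. (\<phi> (g y))^2)"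
      using bd by (intro integrable_const_bound[where B="L^2"] AE_I2) auto
    then have "(\<integral>y. (\<phi> (g y))^2 \<partial>M) \<le> (\<integral>y. L^2 \<partial>M)"
      by (intro integral_mono) (use bd in auto)
    then show "(\<integral>y. (\<phi> (g y))^2 \<partial>M) \<le> L^2" by (simp add: prob_space)
  qed
  have T1: "L2 M (T g)" "(\<integral>x. (T g x)^2 \<partial>M) \<le> q^2" if [measurable]: "g \<in> borel_measurable M" for g
  proof -
    show "L2 M (T g)" unfolding T_def
      by (rule kernel_op(1)) (use Wi phisq[OF that] in auto)
    have "(\<integral>x. (T g x)^2 \<partial>M) \<le> nW * (\<integral>y. (\<phi> (g y))^2 \<partial>M)" unfolding T_def nW_def
      by (rule kernel_op(2)) (use Wi phisq[OF that] in auto)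
    also have "\<dots> \<le> nW * L^2" using phisq_le[OF that] nW0 by (rule mult_left_mono)
    finally show "(\<integral>x. (T g x)^2 \<partial>M) \<le> q^2" using q2 by simp
  qed
  have bL2: "L2 M b" unfolding b_def
    by (rule L2_add[OF kernel_op(1)[OF _ Wini _ xini] assms(6)]) auto
  have AEW: "AE x in M. integrable M (\<lambda>y. (W (x, y))^2)" by (rule AE_sq_int_fst[OF Wi])
  have T2: "(\<integral>x. (T g1 x - T g2 x)^2 \<partial>M) \<le> q^2 * (\<integral>x. (g1 x - g2 x)^2 \<partial>M)"
    if [measurable]: "g1 \<in> borel_measurable M" "g2 \<in> borel_measurable M"
      and gi: "integrable M (\<lambda>x. (g1 x - g2 x)^2)" for g1 g2
  proof -
    define g where "g y = \<phi> (g1 y) - \<phi> (g2 y)" for y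
    have gm[measurable]: "g \<in> borel_measurable M" unfolding g_def by measurable
    have gsq: "integrable M (\<lambda>y. (g y)^2)"
    proof -
      have "L2 M (\<lambda>y. \<phi> (g1 y) - \<phi> (g2 y))"
        by (rule L2_diff) (use phisq[OF that(1)] phisq[OF that(2)] in \<open>auto simp: L2_def\<close>)
      then show ?thesis by (simp add: L2_def g_def)
    qed
    have eq: "AE x in M. T g1 x - T g2 x = (\<integral>y. W (x, y) * g y \<partial>M)"
      using AEW AE_space
    proof eventually_elim
      case (elim x)
      have [measurable]: "(\<lambda>y. W (x, y)) \<in> borel_measurable M"
        using measurable_Pair2[of W M M borel x] elim by simp
      have i1: "integrable M (\<lambda>y. W (x, y) * \<phi> (g1 y))"
        by (rule sq_prod_int) (use elim phisq[OF that(1)] in auto)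
      have i2: "integrable M (\<lambda>y. W (x, y) * \<phi> (g2 y))"
        by (rule sq_prod_int) (use elim phisq[OF that(2)] in auto)
      have "T g1 x - T g2 x = (\<integral>y. W (x, y) * \<phi> (g1 y) - W (x, y) * \<phi> (g2 y) \<partial>M)"
        unfolding T_def using i1 i2 by simp
      also have "\<dots> = (\<integral>y. W (x, y) * g y \<partial>M)"
        unfolding g_def by (simp add: right_diff_distrib)
      finally show ?case .
    qed
    have "(\<integral>x. (T g1 x - T g2 x)^2 \<partial>M) = (\<integral>x. (\<integral>y. W (x, y) * g y \<partial>M)^2 \<partial>M)"
      by (rule integral_cong_AE) (use eq in \<open>auto elim: AE_mp\<close>)
    also have "\<dots> \<le> nW * (\<integral>y. (g y)^2 \<partial>M)" unfolding nW_def
      by (rule kernel_op(2)) (use Wi gsq in auto)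
    also have "(\<integral>y. (g y)^2 \<partial>M) \<le> (\<integral>y. L^2 * (g1 y - g2 y)^2 \<partial>M)"
    proof (rule integral_mono)
      show "integrable M (\<lambda>y. L^2 * (g1 y - g2 y)^2)" using gi by simp
      fix y
      have "\<bar>g y\<bar> \<le> L * \<bar>g1 y - g2 y\<bar>" unfolding g_def by (rule philip)
      then have "\<bar>g y\<bar>^2 \<le> (L * \<bar>g1 y - g2 y\<bar>)^2" by (rule power_mono) simp
      then show "(g y)^2 \<le> L^2 * (g1 y - g2 y)^2" by (simp add: power_mult_distrib)
    qed (rule gsq)
    also have "(\<integral>y. L^2 * (g1 y - g2 y)^2 \<partial>M) = L^2 * (\<integral>y. (g1 y - g2 y)^2 \<partial>M)" by simp
    finally have "(\<integral>x. (T g1 x - T g2 x)^2 \<partial>M) \<le> nW * (L^2 * (\<integral>y. (g1 y - g2 y)^2 \<partial>M))"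
      using nW0 by (simp add: mult_left_mono)
    also have "nW * (L^2 * (\<integral>y. (g1 y - g2 y)^2 \<partial>M)) = (nW * L^2) * (\<integral>y. (g1 y - g2 y)^2 \<partial>M)"
      by (rule mult.assoc[symmetric])
    finally show ?thesis unfolding q2 .
  qed
  define hs where "hs n = rec_nat (\<lambda>_. 0) (\<lambda>_ g. \<lambda>x. T g x + b x) n" for n
  have hs0: "hs 0 = (\<lambda>_. 0)" and hsS: "\<And>n. hs (Suc n) = (\<lambda>x. T (hs n) x + b x)"
    by (simp_all add: hs_def)
  have hsm[measurable]: "hs n \<in> borel_measurable M" for n
    by (induction n) (simp_all add: hs0 hsS)
  have hsL2: "L2 M (hs n)" for n
  proof (induction n)
    case 0 then show ?case by (simp add: hs0 L2_def)
  next
    case (Suc n) then show ?case unfolding hsS by (intro L2_add T1(1) bL2) simp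
  qed
  define D where "D n = (\<integral>x. (hs (Suc n) x - hs n x)^2 \<partial>M)" for n
  have Di: "integrable M (\<lambda>x. (hs (Suc n) x - hs n x)^2)" for n
    using L2_diff[OF hsL2 hsL2] by (simp add: L2_def)
  have D0: "0 \<le> D n" for n unfolding D_def by simp
  have DS: "D (Suc n) \<le> q^2 * D n" for n
  proof -
    have "D (Suc n) = (\<integral>x. (T (hs (Suc n)) x - T (hs n) x)^2 \<partial>M)"
      unfolding D_def by (simp add: hsS)
    also have "\<dots> \<le> q^2 * D n" unfolding D_def by (rule T2) (use Di in auto)
    finally show ?thesis .
  qed
  have Dn: "D n \<le> (q^2)^n * D 0" for n
  proof (induction n)
    case (Suc n)
    have "D (Suc n) \<le> q^2 * D n" by (rule DS)
    also have "\<dots> \<le> q^2 * ((q^2)^n * D 0)" by (rule mult_left_mono[OF Suc]) simp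
    finally show ?case by (simp add: mult.assoc)
  qed simp
  have L1n: "(\<integral>x. \<bar>hs (Suc n) x - hs n x\<bar> \<partial>M) \<le> sqrt (D 0) * q^n" for n
  proof -
    have "(\<integral>x. \<bar>hs (Suc n) x - hs n x\<bar> \<partial>M) \<le> sqrt (D n)"
      unfolding D_def by (rule L1_le_L2) (use Di in auto)
    also have "\<dots> \<le> sqrt ((q^2)^n * D 0)" using Dn by simp
    also have "(q^2)^n = (q^n)^2" by (metis power_mult mult.commute)
    also have "sqrt ((q^n)^2 * D 0) = sqrt (D 0) * q^n" using q0 by (simp add: real_sqrt_mult)
    finally show ?thesis .
  qed
  have summ: "summable (\<lambda>n. \<integral>x. \<bar>hs (Suc n) x - hs n x\<bar> \<partial>M)"
  proof (rule summable_comparison_test)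
    show "\<exists>N. \<forall>n\<ge>N. norm (\<integral>x. \<bar>hs (Suc n) x - hs n x\<bar> \<partial>M) \<le> sqrt (D 0) * q^n"
      using L1n by auto
    show "summable (\<lambda>n. sqrt (D 0) * q^n)" using q0 q1 by (intro summable_mult summable_geometric) simp
  qed
  have AEs: "AE x in M. summable (\<lambda>n. \<bar>hs (Suc n) x - hs n x\<bar>)"
  proof (rule AE_summable[where f="\<lambda>n x. hs (Suc n) x - hs n x"])
    show "integrable M (\<lambda>x. hs (Suc n) x - hs n x)" for n
      by (rule sq_int_imp_int) (use Di in auto)
  qed (use summ in auto)
  define h where "h x = lim (\<lambda>n. hs n x)" for x
  have hm[measurable]: "h \<in> borel_measurable M" unfolding h_def by measurable
  have AEc: "AE x in M. (\<lambda>n. hs n x) \<longlonglongrightarrow> h x"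
    using AEs
  proof eventually_elim
    case (elim x)
    have "summable (\<lambda>n. hs (Suc n) x - hs n x)" using summable_rabs_cancel[OF elim] .
    then have "(\<lambda>n. \<Sum>i<n. hs (Suc i) x - hs i x) \<longlonglongrightarrow> (\<Sum>i. hs (Suc i) x - hs i x)"
      by (rule summable_LIMSEQ)
    moreover have "(\<Sum>i<n. hs (Suc i) x - hs i x) = hs n x" for n
      using sum_lessThan_telescope[of "\<lambda>i. hs i x" n] by (simp add: hs0)
    ultimately have "convergent (\<lambda>n. hs n x)" by (auto simp: convergent_def)
    then show ?case unfolding h_def by (simp add: convergent_LIMSEQ_iff)
  qed
  have eqh: "AE x in M. h x = T h x + b x"
    using AEc AEW AE_space
  proof eventually_elim
    case (elim x)
    have [measurable]: "(\<lambda>y. W (x, y)) \<in> borel_measurable M"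
      using measurable_Pair2[of W M M borel x] elim by simp
    have Wxi: "integrable M (\<lambda>y. W (x, y))"
      by (rule sq_int_imp_int) (use elim in auto)
    have "(\<lambda>n. T (hs n) x) \<longlonglongrightarrow> T h x" unfolding T_def
    proof (rule integral_dominated_convergence[where w="\<lambda>y. L * \<bar>W (x, y)\<bar>"])
      show "integrable M (\<lambda>y. L * \<bar>W (x, y)\<bar>)" using Wxi by simp
      show "AE y in M. (\<lambda>n. W (x, y) * \<phi> (hs n y)) \<longlonglongrightarrow> W (x, y) * \<phi> (h y)"
        using AEc
      proof eventually_elim
        case (elim y)
        have "(\<lambda>n. \<phi> (hs n y)) \<longlonglongrightarrow> \<phi> (h y)"
          by (rule continuous_on_tendsto_compose[OF phic elim]) auto
        then show ?case by (rule tendsto_mult_left)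
      qed
      show "AE y in M. norm (W (x, y) * \<phi> (hs n y)) \<le> L * \<bar>W (x, y)\<bar>" for n
      proof (intro AE_I2)
        fix y
        have "\<bar>W (x, y)\<bar> * \<bar>\<phi> (hs n y)\<bar> \<le> \<bar>W (x, y)\<bar> * L" by (rule mult_left_mono[OF phib]) simp
        then show "norm (W (x, y) * \<phi> (hs n y)) \<le> L * \<bar>W (x, y)\<bar>" by (simp add: abs_mult mult.commute)
      qed
    qed auto
    then have "(\<lambda>n. T (hs n) x + b x) \<longlonglongrightarrow> T h x + b x" by (intro tendsto_add) auto
    then have "(\<lambda>n. hs (Suc n) x) \<longlonglongrightarrow> T h x + b x" by (simp add: hsS)
    moreover have "(\<lambda>n. hs (Suc n) x) \<longlonglongrightarrow> h x" using elim(1) by (rule LIMSEQ_Suc)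
    ultimately show ?case using LIMSEQ_unique by blast
  qed
  have ThL2: "L2 M (\<lambda>x. T h x + b x)" by (intro L2_add T1(1) bL2) simp
  have hL2: "L2 M h"
  proof -
    have "integrable M (\<lambda>x. (h x)^2) = integrable M (\<lambda>x. (T h x + b x)^2)"
      by (rule integrable_cong_AE) (use eqh in \<open>auto elim: AE_mp\<close>)
    then show ?thesis using ThL2 by (simp add: L2_def)
  qed
  have uniq: "AE x in M. h' x = h x" if h'L2: "L2 M h'"
    and eqh': "AE x in M. h' x = T h' x + b x" for h'
  proof -
    have [measurable]: "h' \<in> borel_measurable M" using h'L2 by (simp add: L2_def)
    have di: "integrable M (\<lambda>x. (h' x - h x)^2)" using L2_diff[OF h'L2 hL2] by (simp add: L2_def)
    define I where "I = (\<integral>x. (h' x - h x)^2 \<partial>M)"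
    have I0: "0 \<le> I" unfolding I_def by simp
    have "I = (\<integral>x. (T h' x - T h x)^2 \<partial>M)" unfolding I_def
      by (rule integral_cong_AE) (use eqh eqh' in \<open>auto elim: AE_mp\<close>)
    also have "\<dots> \<le> q^2 * I" unfolding I_def by (rule T2) (use di in auto)
    finally have "I \<le> q^2 * I" .
    moreover have "q^2 < 1" using q0 q1 by (simp add: power_less_one_iff)
    ultimately have "I = 0" using I0 by (metis mult_less_cancel_right2 not_le order_antisym_conv)
    then have "AE x in M. (h' x - h x)^2 = 0" unfolding I_def
      using integral_nonneg_eq_0_iff_AE[OF di] by simp
    then show ?thesis by eventually_elim simp
  qed
  have outL2: "L2 M (\<lambda>x. (\<integral>y. W_out (x, y) * \<psi> (h y) \<partial>M) + \<xi>_out x)"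
  proof (rule L2_add[OF kernel_op(1)[OF _ Wouti] assms(7)])
    have bd: "\<And>y. (\<psi> (h y))^2 \<le> (Lact \<psi>)^2"
      using psib by (metis abs_ge_zero power2_abs power_mono)
    show "integrable M (\<lambda>y. (\<psi> (h y))^2)"
      using bd by (intro integrable_const_bound[where B="(Lact \<psi>)^2"] AE_I2) auto
  qed auto
  have nb: "L2norm M h \<le> 1 + L2norm (M \<Otimes>\<^sub>M M) W_in * L2norm M xin + L2norm M \<xi>"
  proof -
    have "L2norm M h = L2norm M (\<lambda>x. T h x + b x)" unfolding L2norm_def
      by (rule arg_cong[where f=sqrt], rule integral_cong_AE) (use eqh in \<open>auto elim: AE_mp\<close>)
    also have "\<dots> \<le> L2norm M (T h) + L2norm M b" by (rule minkowski[OF T1(1) bL2]) simp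
    also have "L2norm M (T h) \<le> 1"
    proof -
      have "L2norm M (T h) \<le> sqrt (q^2)" unfolding L2norm_def using real_sqrt_le_mono[OF T1(2)[OF hm]] by simp
      then show ?thesis using q0 q1 by simp
    qed
    also have "L2norm M b \<le> L2norm M (\<lambda>x. \<integral>y. W_in (x, y) * xin y \<partial>M) + L2norm M \<xi>"
      unfolding b_def by (rule minkowski[OF kernel_op(1)[OF _ Wini _ xini] assms(6)]) auto
    also have "L2norm M (\<lambda>x. \<integral>y. W_in (x, y) * xin y \<partial>M) \<le> L2norm (M \<Otimes>\<^sub>M M) W_in * L2norm M xin"
    proof -
      have "(\<integral>x. (\<integral>y. W_in (x, y) * xin y \<partial>M)^2 \<partial>M) \<le> (\<integral>z. (W_in z)^2 \<partial>(M \<Otimes>\<^sub>M M)) * (\<integral>y. (xin y)^2 \<partial>M)"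
        by (rule kernel_op(2)[OF _ Wini _ xini]) auto
      then show ?thesis unfolding L2norm_def by (simp add: real_sqrt_mult[symmetric])
    qed
    finally show ?thesis by simp
  qed
  show ?thesis
    apply (rule exI[of _ h])
    using hL2 eqh uniq outL2 nb unfolding T_def b_def by (auto simp: add.assoc)
qed

end


theorem proposition1:
  fixes p :: nat
    and \<phi> \<psi> :: "real \<Rightarrow> real"
    and W_in W_out W :: "(nat \<Rightarrow> nat) \<times> (nat \<Rightarrow> nat) \<Rightarrow> real"
    and \<xi> \<xi>_out xin :: "(nat \<Rightarrow> nat) \<Rightarrow> real"
  assumes "prime p"
    and "activation \<phi>" and "activation \<psi>"
    and "L2 (Zp p \<Otimes>\<^sub>M Zp p) W_in" and "L2 (Zp p \<Otimes>\<^sub>M Zp p) W_out" and "L2 (Zp p \<Otimes>\<^sub>M Zp p) W"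
    and "L2 (Zp p) \<xi>" and "L2 (Zp p) \<xi>_out" and "L2 (Zp p) xin"
    and "0 < Lact \<phi> * L2norm (Zp p \<Otimes>\<^sub>M Zp p) W"
    and "Lact \<phi> * L2norm (Zp p \<Otimes>\<^sub>M Zp p) W < 1"
  shows "\<exists>h. L2 (Zp p) h
    \<and> (AE x in Zp p. h x = (\<integral>y. W (x, y) * \<phi> (h y) \<partial>Zp p)
                          + (\<integral>y. W_in (x, y) * xin y \<partial>Zp p) + \<xi> x)
    \<and> (\<forall>h'. L2 (Zp p) h'
          \<and> (AE x in Zp p. h' x = (\<integral>y. W (x, y) * \<phi> (h' y) \<partial>Zp p)
                          + (\<integral>y. W_in (x, y) * xin y \<partial>Zp p) + \<xi> x)
          \<longrightarrow> (AE x in Zp p. h' x = h x))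
    \<and> L2 (Zp p) (\<lambda>x. (\<integral>y. W_out (x, y) * \<psi> (h y) \<partial>Zp p) + \<xi>_out x)
    \<and> L2norm (Zp p) h \<le> 1 + L2norm (Zp p \<Otimes>\<^sub>M Zp p) W_in * L2norm (Zp p) xin
                         + L2norm (Zp p) \<xi>"
proof -
  have "prob_space (Zp p)" unfolding Zp_def
    by (rule prob_space_PiM) (rule prob_space_measure_pmf)
  then show ?thesis using prob_space.main assms(2-) by blast
qed

end
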